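(* Let $p$ be a prime, $a\in\mathbb{Q}_p$, $a\ne0$, with $\sqrt{-a}\in\mathbb{Q}_p$, $A=|a|_p$, and $f(x)=\frac{ax}{x^2+a}$ on $\mathbb{Q}_p$. Let $0<r<\sqrt A$. Then for every closed ball $V_\rho(c)=\{x\in\mathbb{Q}_p:|x-c|_p\le\rho\}$ contained in $S_r(0)=\{x\in\mathbb{Q}_p:|x|_p=r\}$, one has $f(V_\rho(c))=V_\rho(f(c))$. *)

theory Defs
  imports Complex_Main "HOL-Computational_Algebra.Computational_Algebra"
begin

definition rat_padic_abs :: "nat \<Rightarrow> rat \<Rightarrow> real" where
  "rat_padic_abs p q =
     (if q = 0 then 0
      else (case quotient_of q of (n, d) \<Rightarrow>
              real p powr (real (multiplicity (int p) d) - real (multiplicity (int p) n))))"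

text \<open>This characterises Q_p (the completion of Q w.r.t. |.|_p) up to isometric isomorphism.\<close>
definition is_padic_field :: "nat \<Rightarrow> ('a::field_char_0 \<Rightarrow> real) \<Rightarrow> bool" where
  "is_padic_field p N \<longleftrightarrow>
     (\<forall>x. N x \<ge> 0) \<and> (\<forall>x. N x = 0 \<longleftrightarrow> x = 0) \<and>
     (\<forall>x y. N (x * y) = N x * N y) \<and>
     (\<forall>x y. N (x + y) \<le> max (N x) (N y)) \<and>
     (\<forall>q. N (of_rat q) = rat_padic_abs p q) \<and>
     (\<forall>x e. e > 0 \<longrightarrow> (\<exists>q. N (x - of_rat q) < e)) \<and>
     (\<forall>X :: nat \<Rightarrow> 'a. (\<forall>e>0. \<exists>M. \<forall>m\<ge>M. \<forall>n\<ge>M. N (X m - X n) < e) \<longrightarrow>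
        (\<exists>L. \<forall>e>0. \<exists>M. \<forall>n\<ge>M. N (X n - L) < e))"

end

theory Submission
  imports Defs
begin

context
  fixes p :: nat and N :: "'a::field_char_0 \<Rightarrow> real"
  assumes P: "is_padic_field p N"
begin

lemma N_nonneg: "N x \<ge> 0" using P unfolding is_padic_field_def by blast
lemma N_zero: "N x = 0 \<longleftrightarrow> x = 0" using P unfolding is_padic_field_def by blast
lemma N_mult: "N (x*y) = N x * N y" using P unfolding is_padic_field_def by blast
lemma N_add: "N (x+y) \<le> max (N x) (N y)" using P unfolding is_padic_field_def by blast
lemma N_complete: fixes X :: "nat \<Rightarrow> 'a" assumes "\<forall>e>0. \<exists>M. \<forall>m\<ge>M. \<forall>n\<ge>M. N (X m - X n) < e"
  shows "\<exists>L. \<forall>e>0. \<exists>M. \<forall>n\<ge>M. N (X n - L) < e"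
proof -
  have "\<forall>X :: nat \<Rightarrow> 'a. (\<forall>e>0. \<exists>M. \<forall>m\<ge>M. \<forall>n\<ge>M. N (X m - X n) < e) \<longrightarrow>
        (\<exists>L. \<forall>e>0. \<exists>M. \<forall>n\<ge>M. N (X n - L) < e)" using P unfolding is_padic_field_def by blast
  then have "(\<forall>e>0. \<exists>M. \<forall>m\<ge>M. \<forall>n\<ge>M. N (X m - X n) < e) \<longrightarrow>
        (\<exists>L. \<forall>e>0. \<exists>M. \<forall>n\<ge>M. N (X n - L) < e)" by (rule spec)
  then show ?thesis using assms by (rule mp)
qed

lemma N_one: "N 1 = 1"
proof -
  have "N 1 = N 1 * N 1" using N_mult[of 1 1] by simp
  moreover have "N 1 \<noteq> 0" using N_zero by simp
  ultimately show ?thesis by simp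
qed

lemma N_minus: "N (-x) = N x"
proof -
  have "N (-1) * N (-1) = 1" using N_mult[of "-1" "-1"] N_one by simp
  moreover have "N (-1) \<ge> 0" by (rule N_nonneg)
  ultimately have "N (-1) = 1" by (metis abs_of_nonneg real_sqrt_abs2 real_sqrt_one power2_eq_square)
  then show ?thesis using N_mult[of "-1" x] by simp
qed

lemma N_diff: "N (x - y) \<le> max (N x) (N y)"
  using N_add[of x "-y"] N_minus[of y] by simp

lemma N_commute: "N (x - y) = N (y - x)"
  using N_minus[of "x-y"] by simp

lemma N_inverse: "N (inverse x) = inverse (N x)"
proof (cases "x = 0")
  case True then show ?thesis using N_zero[of 0] by simp
next
  case False
  have "N x * N (inverse x) = 1" using N_mult[of x "inverse x"] False N_one by simp
  moreover have "N x \<noteq> 0" using N_zero[of x] False by simp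
  ultimately show ?thesis by (simp add: field_simps)
qed

lemma N_divide: "N (x / y) = N x / N y"
  by (simp add: divide_inverse N_mult N_inverse)

lemma N_power: "N (x ^ n) = N x ^ n"
  by (induction n) (simp_all add: N_one N_mult)

lemma N_strict: assumes "N x < N y" shows "N (x + y) = N y"
proof -
  have 1: "N (x+y) \<le> max (N x) (N y)" by (rule N_add)
  have 2: "N y \<le> max (N (x+y)) (N x)" using N_add[of "x+y" "-x"] N_minus[of x] by simp
  show ?thesis using 1 2 assms by (auto simp: max_def split: if_splits)
qed

lemma N_sq_lt:
  assumes "N x \<le> r" "r*r < N a"
  shows "N (x^2 + a) = N a"
proof -
  have "N x * N x \<le> r * r" using assms(1) N_nonneg[of x] by (simp add: mult_mono)
  then have "N (x^2) < N a" using assms by (simp add: N_power N_mult power2_eq_square)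
  then show ?thesis by (rule N_strict)
qed

lemma N_f_iso:
  assumes a: "a \<noteq> 0" and x: "N x \<le> r" and z: "N z \<le> r" and ra: "r*r < N a"
  shows "N (a*x/(x^2+a) - a*z/(z^2+a)) = N (x - z)"
proof -
  have hx: "N (x^2 + a) = N a" using N_sq_lt x ra by blast
  have hz: "N (z^2 + a) = N a" using N_sq_lt z ra by blast
  have "N x * N z \<le> r * r" using x z N_nonneg[of x] N_nonneg[of z] by (simp add: mult_mono)
  then have "N (-(x*z)) < N a" using ra by (simp add: N_minus N_mult)
  then have "N (-(x*z) + a) = N a" by (rule N_strict)
  then have hxz: "N (a - x*z) = N a" by (simp add: algebra_simps)
  have Na: "N a \<noteq> 0" using a N_zero by simp
  have nx: "x^2 + a \<noteq> 0" using hx Na N_zero[of "x^2+a"] by auto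
  have nz: "z^2 + a \<noteq> 0" using hz Na N_zero[of "z^2+a"] by auto
  have eq: "a*x/(x^2+a) - a*z/(z^2+a) = a*(x-z)*(a - x*z)/((x^2+a)*(z^2+a))"
    using nx nz by (simp add: divide_simps) (simp add: algebra_simps power2_eq_square)
  show ?thesis unfolding eq using Na by (simp add: N_divide N_mult hx hz hxz)
qed

lemma N_f:
  assumes a: "a \<noteq> 0" and x: "N x \<le> r" and ra: "r*r < N a"
  shows "N (a*x/(x^2+a)) = N x"
proof -
  have hx: "N (x^2 + a) = N a" using N_sq_lt x ra by blast
  have Na: "N a \<noteq> 0" using a N_zero by simp
  show ?thesis using Na by (simp add: N_divide N_mult hx)
qed

lemma fixpt:
  assumes a: "a \<noteq> 0" and y: "N y \<le> r" and r: "0 < r" "r*r < N a"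
  shows "\<exists>x. N x \<le> r \<and> x = y + y*x^2/a"
proof -
  define A where "A = N a"
  have A: "A > 0" using r mult_pos_pos[of r r] unfolding A_def by linarith
  define T where "T = (\<lambda>x. y + y*x^2/a)"
  define k where "k = r*r/A"
  have k: "0 < k" "k < 1" using A r by (auto simp: k_def A_def)
  have Tb: "N (T u) \<le> r" if u: "N u \<le> r" for u
  proof -
    have "N u * N u \<le> r * r" using u N_nonneg[of u] by (simp add: mult_mono)
    then have "N y * (N u * N u) \<le> r * (r*r)" using y N_nonneg[of y] N_nonneg[of u] r
      by (simp add: mult_mono)
    also have "\<dots> \<le> r * A" using r A unfolding A_def by simp
    finally have 1: "N y * (N u * N u) \<le> r * A" .
    have 2: "N (y*u^2/a) = N y * (N u * N u) / A"
      by (simp add: N_divide N_mult N_power power2_eq_square A_def)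
    have "N (y*u^2/a) \<le> r" unfolding 2 using 1 A by (simp add: pos_divide_le_eq)
    then show ?thesis using N_add[of y "y*u^2/a"] y by (simp add: T_def)
  qed
  have Tc: "N (T u - T v) \<le> k * N (u - v)" if u: "N u \<le> r" and v: "N v \<le> r" for u v
  proof -
    have eq: "T u - T v = y*(u-v)*(u+v)/a" by (simp add: T_def divide_simps) (simp add: algebra_simps power2_eq_square)
    have uv: "N (u+v) \<le> r" using N_add[of u v] u v by simp
    have "N y * N (u-v) * N (u+v) \<le> r * N (u-v) * r"
      using y uv N_nonneg[of y] N_nonneg[of "u-v"] N_nonneg[of "u+v"]
      by (simp add: mult_mono mult_right_mono)
    then have "N y * N (u-v) * N (u+v) / A \<le> r * N (u-v) * r / A" using A
      by (simp add: divide_right_mono)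
    moreover have "N (T u - T v) = N y * N (u-v) * N (u+v) / A" unfolding eq by (simp add: N_divide N_mult A_def)
    moreover have "r * N (u-v) * r / A = k * N (u-v)" by (simp add: k_def)
    ultimately show ?thesis by simp
  qed
  define X where "X n = (T ^^ n) y" for n
  have XS: "X (Suc n) = T (X n)" for n by (simp add: X_def)
  have Xb: "N (X n) \<le> r" for n
    by (induction n) (simp_all add: X_def y Tb)
  define D where "D = N (X 1 - X 0)"
  have D: "D \<ge> 0" unfolding D_def by (rule N_nonneg)
  have step: "N (X (Suc n) - X n) \<le> k^n * D" for n
  proof (induction n)
    case 0 then show ?case by (simp add: D_def)
  next
    case (Suc n)
    have "N (X (Suc (Suc n)) - X (Suc n)) \<le> k * N (X (Suc n) - X n)"
      using Tc[OF Xb[of "Suc n"] Xb[of n]] by (simp add: XS)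
    also have "\<dots> \<le> k * (k^n * D)" using Suc k by simp
    finally show ?case by simp
  qed
  have far: "N (X (n+d) - X n) \<le> k^n * D" for n d
  proof (induction d)
    case 0 then show ?case using N_zero[of 0] D k by simp
  next
    case (Suc d)
    have "X (n + Suc d) - X n = (X (Suc (n+d)) - X (n+d)) + (X (n+d) - X n)" by simp
    then have "N (X (n + Suc d) - X n) \<le> max (N (X (Suc (n+d)) - X (n+d))) (N (X (n+d) - X n))"
      using N_add by metis
    moreover have "k^(n+d) * D \<le> k^n * D"
      using k D by (simp add: mult_right_mono power_decreasing)
    ultimately show ?case using step[of "n+d"] Suc by simp
  qed
  have cauchy: "\<forall>e>0. \<exists>M. \<forall>m\<ge>M. \<forall>n\<ge>M. N (X m - X n) < e"
  proof (intro allI impI)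
    fix e :: real assume e: "e > 0"
    obtain M where M: "k^M < e/(D+1)" using real_arch_pow_inv[of "e/(D+1)" k] e D k by auto
    have key: "N (X m - X n) < e" if "M \<le> n" "n \<le> m" for m n
    proof -
      have "N (X m - X n) \<le> k^n * D" using far[of n "m-n"] that by simp
      also have "\<dots> \<le> k^M * D" using k D that by (simp add: mult_right_mono power_decreasing)
      also have "\<dots> \<le> k^M * (D+1)" using k by simp
      also have "\<dots> < e" using M D by (simp add: pos_less_divide_eq)
      finally show ?thesis .
    qed
    show "\<exists>M. \<forall>m\<ge>M. \<forall>n\<ge>M. N (X m - X n) < e"
    proof (intro exI allI impI)
      fix m n assume "M \<le> m" "M \<le> n"
      then show "N (X m - X n) < e"
        using key[of n m] key[of m n] N_commute[of "X m" "X n"] by (cases "n \<le> m") auto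
    qed
  qed
  obtain L where L: "\<forall>e>0. \<exists>M. \<forall>n\<ge>M. N (X n - L) < e"
    using N_complete[OF cauchy] by blast
  have LB: "N L \<le> r"
  proof -
    obtain M where M: "\<forall>n\<ge>M. N (X n - L) < r" using L r by blast
    have "L = X M + (-(X M - L))" by simp
    then have "N L \<le> max (N (X M)) (N (-(X M - L)))" using N_add by metis
    then show ?thesis using M[rule_format, of M] Xb[of M] N_minus[of "X M - L"] by simp
  qed
  have "T L = L"
  proof (rule ccontr)
    assume ne: "T L \<noteq> L"
    define d where "d = N (T L - L)"
    have d: "d > 0" using ne N_zero[of "T L - L"] N_nonneg[of "T L - L"] by (simp add: d_def)
    obtain M where M: "\<forall>n\<ge>M. N (X n - L) < d" using L d by blast
    have "N (T L - T (X M)) \<le> k * N (L - X M)" using Tc LB Xb by blast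
    also have "\<dots> \<le> N (L - X M)" using k N_nonneg[of "L - X M"] by (simp add: mult_left_le_one_le)
    also have "\<dots> < d" using M N_commute[of L "X M"] by simp
    finally have 1: "N (T L - T (X M)) < d" .
    have 2: "N (X (Suc M) - L) < d" using M by simp
    have "T L - L = (T L - T (X M)) + (X (Suc M) - L)" by (simp add: XS)
    then have "N (T L - L) \<le> max (N (T L - T (X M))) (N (X (Suc M) - L))" using N_add by metis
    then have "d < d" using 1 2 by (simp add: d_def)
    then show False by simp
  qed
  then show ?thesis using LB by (auto simp: T_def)
qed

end

theorem lemma3p2:
  fixes p :: nat and N :: "'a::field_char_0 \<Rightarrow> real" and a c :: 'a and r \<rho> :: real
  assumes "prime p" and "is_padic_field p N"
    and "a \<noteq> 0" and "\<exists>s. s * s = - a"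
    and "0 < r" and "r < sqrt (N a)"
    and "{x. N (x - c) \<le> \<rho>} \<subseteq> {x. N x = r}"
  shows "(\<lambda>x. a * x / (x\<^sup>2 + a)) ` {x. N (x - c) \<le> \<rho>}
           = {y. N (y - a * c / (c\<^sup>2 + a)) \<le> \<rho>}"
proof -
  note P = assms(2)
  have Na0: "N a \<ge> 0" using N_nonneg[OF P] by blast
  have ra: "r*r < N a"
  proof -
    have "0 < sqrt (N a)" using assms(5,6) by linarith
    then have "r * r < sqrt (N a) * sqrt (N a)" using mult_strict_mono[of r "sqrt (N a)" r "sqrt (N a)"] assms(5,6) by linarith
    then show ?thesis using Na0 by simp
  qed
  show ?thesis
  proof (cases "\<rho> < 0")
    case True
    have e1: "{x. N (x - c) \<le> \<rho>} = {}" using True N_nonneg[OF P] by (auto simp: not_le intro: less_le_trans)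
    have e2: "{y. N (y - a * c / (c\<^sup>2 + a)) \<le> \<rho>} = {}"
      using True N_nonneg[OF P] by (auto simp: not_le intro: less_le_trans)
    show ?thesis unfolding e1 e2 by simp
  next
    case False
    have "c \<in> {x. N (x - c) \<le> \<rho>}" using False N_zero[OF P, of 0] by simp
    then have c: "N c = r" using assms(7) by blast
    have rho: "\<rho> < r"
    proof (rule ccontr)
      assume "\<not> \<rho> < r"
      then have "N (0 - c) \<le> \<rho>" using c N_minus[OF P, of c] by simp
      then have "N 0 = r" using assms(7) by blast
      then show False using N_zero[OF P, of 0] assms(5) by simp
    qed
    have fc: "N (a*c/(c^2+a)) = r" using N_f[OF P assms(3), of c r] c ra by simp
    show ?thesis
    proof
      show "(\<lambda>x. a * x / (x\<^sup>2 + a)) ` {x. N (x - c) \<le> \<rho>} \<subseteq> {y. N (y - a * c / (c\<^sup>2 + a)) \<le> \<rho>}"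
      proof
        fix y assume "y \<in> (\<lambda>x. a * x / (x\<^sup>2 + a)) ` {x. N (x - c) \<le> \<rho>}"
        then obtain x where x: "N (x - c) \<le> \<rho>" and yx: "y = a * x / (x\<^sup>2 + a)" by auto
        have "N x = r" using x assms(7) by blast
        then show "y \<in> {y. N (y - a * c / (c\<^sup>2 + a)) \<le> \<rho>}"
          using N_f_iso[OF P assms(3), of x r c] c ra x yx by simp
      qed
    next
      show "{y. N (y - a * c / (c\<^sup>2 + a)) \<le> \<rho>} \<subseteq> (\<lambda>x. a * x / (x\<^sup>2 + a)) ` {x. N (x - c) \<le> \<rho>}"
      proof
        fix y assume "y \<in> {y. N (y - a * c / (c\<^sup>2 + a)) \<le> \<rho>}"
        then have y: "N (y - a * c / (c\<^sup>2 + a)) \<le> \<rho>" by simp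
        have "y = (y - a * c / (c\<^sup>2 + a)) + a * c / (c\<^sup>2 + a)" by simp
        then have "N y \<le> max (N (y - a * c / (c\<^sup>2 + a))) (N (a * c / (c\<^sup>2 + a)))"
          using N_add[OF P] by metis
        then have yr: "N y \<le> r" using y fc rho by simp
        obtain x where x: "N x \<le> r" and xe: "x = y + y*x^2/a"
          using fixpt[OF P assms(3) yr assms(5) ra] by blast
        have "N (x^2 + a) = N a" using N_sq_lt[OF P x ra] .
        then have nz: "x^2 + a \<noteq> 0" using N_zero[OF P, of "x^2+a"] N_zero[OF P, of a] assms(3) by auto
        have "a * x = y * (x^2 + a)"
        proof -
          have "a * x = a * (y + y*x^2/a)" using xe by simp
          also have "\<dots> = y * (x^2 + a)" using assms(3) by (simp add: field_simps)
          finally show ?thesis .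
        qed
        then have fx: "a * x / (x^2 + a) = y" using nz by (simp add: divide_simps)
        have "N (x - c) = N (y - a * c / (c\<^sup>2 + a))"
          using N_f_iso[OF P assms(3) x, of c] c ra fx by simp
        then have "N (x - c) \<le> \<rho>" using y by simp
        then show "y \<in> (\<lambda>x. a * x / (x\<^sup>2 + a)) ` {x. N (x - c) \<le> \<rho>}"
          using fx by (intro rev_image_eqI[of x]) auto
      qed
    qed
  qed
qed

end
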